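(* Let $Y\in\mathbb{R}^{N\times M}$, $k\ge1$, and $\alpha,\nu,\gamma\ge0$. Consider $$\min_{A\in\mathbb{R}^{N\times k},\,P\in\mathbb{R}^{k\times M},\ A\ge0,\ P\ge0} J(A,P):=\|Y-AP\|_{F,2}^2+\alpha\|A\|_{F,1}+\nu\|P\|_{F,1}+\gamma\|PP^T-I\|_{F,1},$$ where $I$ is the $k\times k$ identity. If $(A,P)$ is a (local) minimizer of this problem, then for any constants $c_1,c_2>0$ there exist matrices $L\in\mathbb{R}^{k\times k}$, $\mu_A,\lambda_A\in\mathbb{R}^{N\times k}$, $\mu_P,\lambda_P\in\mathbb{R}^{k\times M}$, $\lambda_L\in\mathbb{R}^{k\times k}$ such that $$\begin{cases} 0=2APP^T-2YP^T+\mu_A+\alpha\lambda_A,\\ \lambda_A=\dfrac{\lambda_A+c_2A}{\max(1,|\lambda_A+c_2A|)},\\ \mu_A=\min(\mu_A+c_1A,0),\\ 0=-2A^TY+2A^TAP+\mu_P+\nu\lambda_P+\gamma(\lambda_L+\lambda_L^T)P,\\ \lambda_P=\dfrac{\lambda_P+c_2P}{\max(1,|\lambda_P+c_2P|)},\\ L=PP^T-I,\\ \lambda_L=\dfrac{\lambda_L+c_2L}{\max(1,|\lambda_L+c_2L|)},\\ \mu_P=\min(\mu_P+c_1P,0), \end{cases}$$ where division, maximum, minimum and absolute value are taken entrywise.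
   Context: For a matrix $X$, $\|X\|_{F,2}=\sqrt{\sum_{i,j}|X_{ij}|^2}$ and $\|X\|_{F,1}=\sum_{i,j}|X_{ij}|$; $A\ge0$ means entrywise nonnegativity. Necessary optimality is understood in the sense of generalized (Clarke) subdifferential calculus for this nonsmooth, nonconvex problem. *)

theory Defs
  imports "HOL-Analysis.Analysis"
begin

text \<open>Matrices are rendered as Cartesian-space matrices: a matrix in R^(r x c) is
  a value of type real^'c^'r, entry (i,j) is X$i$j. Dimensions are type-indexed,
  hence arbitrary but fixed and automatically at least 1.\<close>

definition frob2 :: "real^'c^'r \<Rightarrow> real" where
  "frob2 X = sqrt (\<Sum>i\<in>UNIV. \<Sum>j\<in>UNIV. \<bar>X$i$j\<bar>^2)"

definition frob1 :: "real^'c^'r \<Rightarrow> real" where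
  "frob1 X = (\<Sum>i\<in>UNIV. \<Sum>j\<in>UNIV. \<bar>X$i$j\<bar>)"

definition nonneg_mat :: "real^'c^'r \<Rightarrow> bool" where
  "nonneg_mat X \<longleftrightarrow> (\<forall>i j. 0 \<le> X$i$j)"

definition Jobj :: "real^'m^'n \<Rightarrow> real \<Rightarrow> real \<Rightarrow> real \<Rightarrow> real^'k^'n \<Rightarrow> real^'m^'k \<Rightarrow> real" where
  "Jobj Y \<alpha> \<nu> \<gamma> A P =
     (frob2 (Y - A ** P))^2 + \<alpha> * frob1 A + \<nu> * frob1 P
     + \<gamma> * frob1 (P ** transpose P - mat 1)"

definition local_min_J :: "real^'m^'n \<Rightarrow> real \<Rightarrow> real \<Rightarrow> real \<Rightarrow> real^'k^'n \<Rightarrow> real^'m^'k \<Rightarrow> bool" where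
  "local_min_J Y \<alpha> \<nu> \<gamma> A P \<longleftrightarrow>
     nonneg_mat A \<and> nonneg_mat P \<and>
     (\<exists>e>0. \<forall>A' P'. nonneg_mat A' \<longrightarrow> nonneg_mat P' \<longrightarrow> dist A' A < e \<longrightarrow> dist P' P < e
        \<longrightarrow> Jobj Y \<alpha> \<nu> \<gamma> A P \<le> Jobj Y \<alpha> \<nu> \<gamma> A' P')"

end

theory Submission
  imports Defs
begin

lemma neg_sq_le: "- (x^2 * l) \<le> (x::real)^2 * \<bar>l\<bar>"
proof -
  have "x^2 * (-l) \<le> x^2 * \<bar>l\<bar>" by (rule mult_left_mono) auto
  then show ?thesis by simp
qed

lemma abs_quad_bound:
  fixes L l1 l2 :: real
  shows "\<forall>\<^sub>F t in at_right 0. \<bar>L + t*l1 + t^2*l2\<bar> \<le> \<bar>L\<bar> + t * (if L = 0 then \<bar>l1\<bar> else sgn L * l1) + t^2*\<bar>l2\<bar>"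
proof (cases "L = 0")
  case True
  have "\<forall>\<^sub>F t in at_right 0. (0::real) < t" by (rule eventually_at_right_less)
  then show ?thesis
  proof (rule eventually_mono)
    fix t :: real assume t: "0 < t"
    have "\<bar>t*l1 + t^2*l2\<bar> \<le> \<bar>t*l1\<bar> + \<bar>t^2*l2\<bar>" by (rule abs_triangle_ineq)
    also have "\<dots> = t*\<bar>l1\<bar> + t^2*\<bar>l2\<bar>" using t by (simp add: abs_mult)
    finally show "\<bar>L + t*l1 + t^2*l2\<bar> \<le> \<bar>L\<bar> + t * (if L = 0 then \<bar>l1\<bar> else sgn L * l1) + t^2*\<bar>l2\<bar>"
      using True by simp
  qed
next
  case False
  have lim: "((\<lambda>t. L + t*l1 + t^2*l2) \<longlongrightarrow> L + 0*l1 + 0^2*l2) (at_right 0)"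
    by (intro tendsto_intros)
  show ?thesis
  proof (cases "L > 0")
    case True
    have "\<forall>\<^sub>F t in at_right 0. L + t*l1 + t^2*l2 > 0"
      using lim True by (intro order_tendstoD) auto
    then show ?thesis
      by (rule eventually_mono) (use True in \<open>auto intro: mult_left_mono\<close>)
  next
    case F2: False
    with False have Lneg: "L < 0" by simp
    have "\<forall>\<^sub>F t in at_right 0. L + t*l1 + t^2*l2 < 0"
      using lim Lneg by (intro order_tendstoD) auto
    then show ?thesis
      by (rule eventually_mono) (use Lneg in \<open>auto intro: neg_sq_le\<close>)
  qed
qed

lemma limit_nonneg:
  fixes S C :: real
  assumes "\<forall>\<^sub>F t in at_right 0. 0 \<le> S + t*C"
  shows "0 \<le> S"
proof -
  have "((\<lambda>t. S + t*C) \<longlongrightarrow> S + 0*C) (at_right (0::real))" by (intro tendsto_intros)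
  then show ?thesis using assms by (intro tendsto_lowerbound) (auto simp: trivial_limit_at_right_real)
qed

lemma sum_sq_expand:
  fixes r z :: "'a \<Rightarrow> 'b \<Rightarrow> real" and I :: "'a set" and J :: "'b set"
  shows "(\<Sum>i\<in>I. \<Sum>j\<in>J. (r i j - t * z i j)^2) =
    (\<Sum>i\<in>I. \<Sum>j\<in>J. (r i j)^2) - t * (2 * (\<Sum>i\<in>I. \<Sum>j\<in>J. r i j * z i j)) + t^2 * (\<Sum>i\<in>I. \<Sum>j\<in>J. (z i j)^2)"
  by (simp add: power2_diff sum.distrib sum_subtractf sum_distrib_left algebra_simps power_mult_distrib)

lemma frob2_sq: "(frob2 X)^2 = (\<Sum>i\<in>UNIV. \<Sum>j\<in>UNIV. (X$i$j)^2)"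
  unfolding frob2_def by (simp add: sum_nonneg)

lemma mm_entry: "(A ** B)$i$j = (\<Sum>k\<in>UNIV. A$i$k * B$k$j)"
  by (simp add: matrix_matrix_mult_def)

lemma resid_P:
  fixes Y :: "real^'m^'n" and A :: "real^'k^'n" and P D :: "real^'m^'k"
  shows "(Y - A ** (P + t *\<^sub>R D))$i$j = (Y - A ** P)$i$j - t * (A ** D)$i$j"
  by (simp add: matrix_add_ldistrib mm_entry sum_distrib_left algebra_simps)

lemma resid_A:
  fixes Y :: "real^'m^'n" and A D :: "real^'k^'n" and P :: "real^'m^'k"
  shows "(Y - (A + t *\<^sub>R D) ** P)$i$j = (Y - A ** P)$i$j - t * (D ** P)$i$j"
  by (simp add: mm_entry sum_distrib_left sum.distrib algebra_simps)

lemma gram_expand: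
  fixes P D :: "real^'m^'k"
  shows "((P + t *\<^sub>R D) ** transpose (P + t *\<^sub>R D) - mat 1)$a$b =
     (P ** transpose P - mat 1)$a$b + t * (\<Sum>l\<in>UNIV. P$a$l * D$b$l + D$a$l * P$b$l)
     + t^2 * (\<Sum>l\<in>UNIV. D$a$l * D$b$l)"
  by (simp add: mm_entry transpose_def sum_distrib_left sum.distrib algebra_simps power2_eq_square)

lemma frob1_nonneg: "nonneg_mat X \<Longrightarrow> frob1 X = (\<Sum>i\<in>UNIV. \<Sum>j\<in>UNIV. X$i$j)"
  unfolding frob1_def nonneg_mat_def by simp

lemma frob1_shift:
  assumes "nonneg_mat X" "nonneg_mat (X + t *\<^sub>R D)"
  shows "frob1 (X + t *\<^sub>R D) = frob1 X + t * (\<Sum>i\<in>UNIV. \<Sum>j\<in>UNIV. D$i$j)"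
  using assms by (simp add: frob1_nonneg sum.distrib sum_distrib_left)

lemma ev_nonneg:
  fixes P D :: "real^'m^'k"
  assumes "nonneg_mat P" "\<forall>i j. P$i$j = 0 \<longrightarrow> 0 \<le> D$i$j"
  shows "\<forall>\<^sub>F t in at_right 0. nonneg_mat (P + t *\<^sub>R D)"
proof -
  have "\<forall>\<^sub>F t in at_right 0. 0 \<le> P$i$j + t * D$i$j" for i j
  proof (cases "P$i$j = 0")
    case True
    have "\<forall>\<^sub>F t in at_right 0. (0::real) < t" by (rule eventually_at_right_less)
    then show ?thesis by (rule eventually_mono) (use True assms(2) in auto)
  next
    case False
    then have pos: "P$i$j > 0" using assms(1) unfolding nonneg_mat_def by (metis order_le_less)
    have "((\<lambda>t. P$i$j + t * D$i$j) \<longlongrightarrow> P$i$j + 0 * D$i$j) (at_right (0::real))"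
      by (intro tendsto_intros)
    then have "\<forall>\<^sub>F t in at_right 0. 0 < P$i$j + t * D$i$j"
      using pos by (intro order_tendstoD) auto
    then show ?thesis by (rule eventually_mono) auto
  qed
  then have "\<forall>\<^sub>F t in at_right 0. \<forall>i j. 0 \<le> P$i$j + t * D$i$j"
    by (intro eventually_all_finite) auto
  then show ?thesis by (rule eventually_mono) (simp add: nonneg_mat_def)
qed

lemma ev_dist:
  fixes D P :: "'a::real_normed_vector"
  assumes "e > 0"
  shows "\<forall>\<^sub>F t in at_right 0. dist (P + t *\<^sub>R D) P < e"
proof -
  have "((\<lambda>t. \<bar>t\<bar> * norm D) \<longlongrightarrow> \<bar>0\<bar> * norm D) (at_right (0::real))"
    by (intro tendsto_intros)
  then have "\<forall>\<^sub>F t in at_right 0. \<bar>t\<bar> * norm D < e" using assms by (intro order_tendstoD) auto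
  then show ?thesis by (rule eventually_mono) (simp add: dist_norm)
qed

definition l1P :: "real^'m^'k \<Rightarrow> real^'m^'k \<Rightarrow> 'k \<Rightarrow> 'k \<Rightarrow> real" where
  "l1P P D a b = (\<Sum>l\<in>UNIV. P$a$l * D$b$l + D$a$l * P$b$l)"

lemma P_dir:
  fixes Y :: "real^'m^'n" and A :: "real^'k^'n" and P D :: "real^'m^'k"
  assumes lm: "local_min_J Y \<alpha> \<nu> \<gamma> A P" and g: "\<gamma> \<ge> 0"
    and Dt: "\<forall>i j. P$i$j = 0 \<longrightarrow> 0 \<le> D$i$j"
  shows "0 \<le> -2 * (\<Sum>i\<in>UNIV. \<Sum>j\<in>UNIV. (Y - A ** P)$i$j * (A ** D)$i$j)
     + \<nu> * (\<Sum>i\<in>UNIV. \<Sum>j\<in>UNIV. D$i$j)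
     + \<gamma> * (\<Sum>a\<in>UNIV. \<Sum>b\<in>UNIV. (let L = (P ** transpose P - mat 1)$a$b in
               if L = 0 then \<bar>l1P P D a b\<bar> else sgn L * l1P P D a b))"
  (is "0 \<le> ?S")
proof -
  define R where "R = Y - A ** P"
  define L where "L = P ** transpose P - mat 1"
  define l2 where "l2 a b = (\<Sum>l\<in>UNIV. D$a$l * D$b$l)" for a b
  define phi where "phi a b = (if L$a$b = 0 then \<bar>l1P P D a b\<bar> else sgn (L$a$b) * l1P P D a b)" for a b
  define S' where "S' = -2 * (\<Sum>i\<in>UNIV. \<Sum>j\<in>UNIV. R$i$j * (A ** D)$i$j)
     + \<nu> * (\<Sum>i\<in>UNIV. \<Sum>j\<in>UNIV. D$i$j) + \<gamma> * (\<Sum>a\<in>UNIV. \<Sum>b\<in>UNIV. phi a b)"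
  have SS: "?S = S'" unfolding S'_def phi_def R_def L_def Let_def by (rule refl)
  define C where "C = (\<Sum>i\<in>UNIV. \<Sum>j\<in>UNIV. ((A ** D)$i$j)^2) + \<gamma> * (\<Sum>a\<in>UNIV. \<Sum>b\<in>UNIV. \<bar>l2 a b\<bar>)"
  from lm obtain e where e: "e > 0" and P0: "nonneg_mat P" and A0: "nonneg_mat A"
    and mn: "\<And>A' P'. nonneg_mat A' \<Longrightarrow> nonneg_mat P' \<Longrightarrow> dist A' A < e \<Longrightarrow> dist P' P < e
        \<Longrightarrow> Jobj Y \<alpha> \<nu> \<gamma> A P \<le> Jobj Y \<alpha> \<nu> \<gamma> A' P'"
    unfolding local_min_J_def by blast
  have J0: "Jobj Y \<alpha> \<nu> \<gamma> A P = (\<Sum>i\<in>UNIV. \<Sum>j\<in>UNIV. (R$i$j)^2) + \<alpha> * frob1 A + \<nu> * frob1 P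
     + \<gamma> * (\<Sum>a\<in>UNIV. \<Sum>b\<in>UNIV. \<bar>L$a$b\<bar>)"
    unfolding Jobj_def frob2_sq R_def L_def by (simp add: frob1_def)
  have ev3: "\<forall>\<^sub>F t in at_right 0. \<forall>a b. \<bar>L$a$b + t * l1P P D a b + t^2 * l2 a b\<bar> \<le>
      \<bar>L$a$b\<bar> + t * phi a b + t^2 * \<bar>l2 a b\<bar>"
    unfolding phi_def by (intro eventually_all_finite allI abs_quad_bound)
  have "\<forall>\<^sub>F t in at_right 0. 0 \<le> S' + t * C"
    using ev3 ev_nonneg[OF P0 Dt] ev_dist[OF e, of P D] eventually_at_right_less[of 0]
  proof eventually_elim
    case (elim t)
    then have b3: "\<And>a b. \<bar>L$a$b + t * l1P P D a b + t^2 * l2 a b\<bar> \<le>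
      \<bar>L$a$b\<bar> + t * phi a b + t^2 * \<bar>l2 a b\<bar>"
      and nn: "nonneg_mat (P + t *\<^sub>R D)" and dd: "dist (P + t *\<^sub>R D) P < e" and t: "0 < t" by auto
    have "Jobj Y \<alpha> \<nu> \<gamma> A P \<le> Jobj Y \<alpha> \<nu> \<gamma> A (P + t *\<^sub>R D)"
      using mn[OF A0 nn _ dd] e by simp
    also have "\<dots> = (\<Sum>i\<in>UNIV. \<Sum>j\<in>UNIV. (R$i$j - t * (A ** D)$i$j)^2) + \<alpha> * frob1 A
        + \<nu> * (frob1 P + t * (\<Sum>i\<in>UNIV. \<Sum>j\<in>UNIV. D$i$j))
        + \<gamma> * (\<Sum>a\<in>UNIV. \<Sum>b\<in>UNIV. \<bar>L$a$b + t * l1P P D a b + t^2 * l2 a b\<bar>)"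
      unfolding Jobj_def frob2_sq resid_P frob1_shift[OF P0 nn] R_def
      unfolding frob1_def[of "_ ** _ - mat 1"] gram_expand
      by (simp add: L_def l1P_def l2_def)
    also have "\<dots> \<le> (\<Sum>i\<in>UNIV. \<Sum>j\<in>UNIV. (R$i$j - t * (A ** D)$i$j)^2) + \<alpha> * frob1 A
        + \<nu> * (frob1 P + t * (\<Sum>i\<in>UNIV. \<Sum>j\<in>UNIV. D$i$j))
        + \<gamma> * (\<Sum>a\<in>UNIV. \<Sum>b\<in>UNIV. \<bar>L$a$b\<bar> + t * phi a b + t^2 * \<bar>l2 a b\<bar>)"
      using b3 g by (intro add_left_mono mult_left_mono sum_mono) auto
    also have "(\<Sum>a\<in>UNIV. \<Sum>b\<in>UNIV. \<bar>L$a$b\<bar> + t * phi a b + t^2 * \<bar>l2 a b\<bar>) =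
       (\<Sum>a\<in>UNIV. \<Sum>b\<in>UNIV. \<bar>L$a$b\<bar>) + t * (\<Sum>a\<in>UNIV. \<Sum>b\<in>UNIV. phi a b) + t^2 * (\<Sum>a\<in>UNIV. \<Sum>b\<in>UNIV. \<bar>l2 a b\<bar>)"
      by (simp add: sum.distrib sum_distrib_left)
    also have "(\<Sum>i\<in>UNIV. \<Sum>j\<in>UNIV. (R$i$j - t * (A ** D)$i$j)^2) =
      (\<Sum>i\<in>UNIV. \<Sum>j\<in>UNIV. (R$i$j)^2) - t * (2 * (\<Sum>i\<in>UNIV. \<Sum>j\<in>UNIV. R$i$j * (A ** D)$i$j))
      + t^2 * (\<Sum>i\<in>UNIV. \<Sum>j\<in>UNIV. ((A ** D)$i$j)^2)"
      by (rule sum_sq_expand)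
    finally have "0 \<le> t * (S' + t * C)" unfolding J0 S'_def C_def by (simp add: algebra_simps power2_eq_square)
    then show ?case using t by (simp add: zero_le_mult_iff)
  qed
  then show ?thesis unfolding SS by (rule limit_nonneg)
qed

lemma inner_mat: "inner (X::real^'c^'r) Z = (\<Sum>i\<in>UNIV. \<Sum>j\<in>UNIV. X$i$j * Z$i$j)"
  by (simp add: inner_vec_def)

lemma idA:
  fixes Y :: "real^'m^'n" and A D :: "real^'k^'n" and P :: "real^'m^'k"
  shows "-2 * (\<Sum>i\<in>UNIV. \<Sum>j\<in>UNIV. (Y - A ** P)$i$j * (D ** P)$i$j) + \<alpha> * (\<Sum>i\<in>UNIV. \<Sum>j\<in>UNIV. D$i$j)
    = inner D (2 *\<^sub>R (A ** P ** transpose P) - 2 *\<^sub>R (Y ** transpose P) + (\<chi> i j. \<alpha>))"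
proof -
  have "(\<Sum>i\<in>UNIV. \<Sum>j\<in>UNIV. (Y - A ** P)$i$j * (D ** P)$i$j)
     = (\<Sum>i\<in>UNIV. \<Sum>j\<in>UNIV. \<Sum>k\<in>UNIV. (Y - A ** P)$i$j * D$i$k * P$k$j)"
    by (simp add: mm_entry sum_distrib_left mult.assoc)
  also have "\<dots> = (\<Sum>i\<in>UNIV. \<Sum>k\<in>UNIV. \<Sum>j\<in>UNIV. (Y - A ** P)$i$j * D$i$k * P$k$j)"
    by (rule sum.cong[OF refl], rule sum.swap)
  also have "\<dots> = (\<Sum>i\<in>UNIV. \<Sum>k\<in>UNIV. D$i$k * ((Y ** transpose P)$i$k - (A ** P ** transpose P)$i$k))"
    by (simp add: mm_entry transpose_def sum_distrib_left sum_subtractf algebra_simps)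
  also have "-2 * \<dots> + \<alpha> * (\<Sum>i\<in>UNIV. \<Sum>j\<in>UNIV. D$i$j) =
     (\<Sum>i\<in>UNIV. \<Sum>k\<in>UNIV. -2 * (D$i$k * ((Y ** transpose P)$i$k - (A ** P ** transpose P)$i$k)) + \<alpha> * D$i$k)"
    by (simp only: sum.distrib sum_distrib_left)
  also have "\<dots> = inner D (2 *\<^sub>R (A ** P ** transpose P) - 2 *\<^sub>R (Y ** transpose P) + (\<chi> i j. \<alpha>))"
    unfolding inner_mat by (intro sum.cong refl) (simp add: algebra_simps)
  finally show ?thesis .
qed

lemma idP:
  fixes Y :: "real^'m^'n" and A :: "real^'k^'n" and P D :: "real^'m^'k" and lam :: "real^'k^'k"
  shows "-2 * (\<Sum>i\<in>UNIV. \<Sum>j\<in>UNIV. (Y - A ** P)$i$j * (A ** D)$i$j) + \<nu> * (\<Sum>i\<in>UNIV. \<Sum>j\<in>UNIV. D$i$j)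
      + \<gamma> * (\<Sum>a\<in>UNIV. \<Sum>b\<in>UNIV. lam$a$b * l1P P D a b)
    = inner D (- 2 *\<^sub>R (transpose A ** Y) + 2 *\<^sub>R (transpose A ** A ** P) + (\<chi> i j. \<nu>)
          + \<gamma> *\<^sub>R ((lam + transpose lam) ** P))"
proof -
  have e1: "(\<Sum>i\<in>UNIV. \<Sum>j\<in>UNIV. (Y - A ** P)$i$j * (A ** D)$i$j)
     = (\<Sum>k\<in>UNIV. \<Sum>j\<in>UNIV. D$k$j * ((transpose A ** Y)$k$j - (transpose A ** A ** P)$k$j))"
  proof -
    have "(\<Sum>i\<in>UNIV. \<Sum>j\<in>UNIV. (Y - A ** P)$i$j * (A ** D)$i$j)
       = (\<Sum>i\<in>UNIV. \<Sum>j\<in>UNIV. \<Sum>k\<in>UNIV. (Y - A ** P)$i$j * A$i$k * D$k$j)"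
      by (simp add: mm_entry sum_distrib_left mult.assoc)
    also have "\<dots> = (\<Sum>j\<in>UNIV. \<Sum>i\<in>UNIV. \<Sum>k\<in>UNIV. (Y - A ** P)$i$j * A$i$k * D$k$j)"
      by (rule sum.swap)
    also have "\<dots> = (\<Sum>j\<in>UNIV. \<Sum>k\<in>UNIV. \<Sum>i\<in>UNIV. (Y - A ** P)$i$j * A$i$k * D$k$j)"
      by (rule sum.cong[OF refl], rule sum.swap)
    also have "\<dots> = (\<Sum>k\<in>UNIV. \<Sum>j\<in>UNIV. \<Sum>i\<in>UNIV. (Y - A ** P)$i$j * A$i$k * D$k$j)"
      by (rule sum.swap)
    also have "\<dots> = (\<Sum>k\<in>UNIV. \<Sum>j\<in>UNIV. D$k$j * ((transpose A ** Y)$k$j - (transpose A ** (A ** P))$k$j))"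
      by (simp add: mm_entry transpose_def sum_distrib_left sum_subtractf algebra_simps)
    finally show ?thesis by (simp add: matrix_mul_assoc)
  qed
  have e2: "(\<Sum>a\<in>UNIV. \<Sum>b\<in>UNIV. lam$a$b * l1P P D a b)
      = (\<Sum>i\<in>UNIV. \<Sum>j\<in>UNIV. D$i$j * ((lam + transpose lam) ** P)$i$j)"
  proof -
    have s1: "(\<Sum>a\<in>UNIV. \<Sum>b\<in>UNIV. \<Sum>l\<in>UNIV. lam$a$b * P$a$l * D$b$l)
        = (\<Sum>b\<in>UNIV. \<Sum>l\<in>UNIV. D$b$l * (\<Sum>a\<in>UNIV. lam$a$b * P$a$l))"
    proof -
      have "(\<Sum>a\<in>UNIV. \<Sum>b\<in>UNIV. \<Sum>l\<in>UNIV. lam$a$b * P$a$l * D$b$l)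
          = (\<Sum>b\<in>UNIV. \<Sum>a\<in>UNIV. \<Sum>l\<in>UNIV. lam$a$b * P$a$l * D$b$l)" by (rule sum.swap)
      also have "\<dots> = (\<Sum>b\<in>UNIV. \<Sum>l\<in>UNIV. \<Sum>a\<in>UNIV. lam$a$b * P$a$l * D$b$l)"
        by (rule sum.cong[OF refl], rule sum.swap)
      finally show ?thesis by (simp add: sum_distrib_left algebra_simps)
    qed
    have s2: "(\<Sum>a\<in>UNIV. \<Sum>b\<in>UNIV. \<Sum>l\<in>UNIV. lam$a$b * D$a$l * P$b$l)
        = (\<Sum>a\<in>UNIV. \<Sum>l\<in>UNIV. D$a$l * (\<Sum>b\<in>UNIV. lam$a$b * P$b$l))"
    proof -
      have "(\<Sum>a\<in>UNIV. \<Sum>b\<in>UNIV. \<Sum>l\<in>UNIV. lam$a$b * D$a$l * P$b$l)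
          = (\<Sum>a\<in>UNIV. \<Sum>l\<in>UNIV. \<Sum>b\<in>UNIV. lam$a$b * D$a$l * P$b$l)"
        by (rule sum.cong[OF refl], rule sum.swap)
      then show ?thesis by (simp add: sum_distrib_left algebra_simps)
    qed
    have "(\<Sum>a\<in>UNIV. \<Sum>b\<in>UNIV. lam$a$b * l1P P D a b)
       = (\<Sum>a\<in>UNIV. \<Sum>b\<in>UNIV. \<Sum>l\<in>UNIV. lam$a$b * P$a$l * D$b$l)
        + (\<Sum>a\<in>UNIV. \<Sum>b\<in>UNIV. \<Sum>l\<in>UNIV. lam$a$b * D$a$l * P$b$l)"
      by (simp add: l1P_def sum_distrib_left sum.distrib algebra_simps)
    also have "\<dots> = (\<Sum>i\<in>UNIV. \<Sum>j\<in>UNIV. D$i$j * ((lam + transpose lam) ** P)$i$j)"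
      unfolding s1 s2
      by (simp add: mm_entry transpose_def sum.distrib algebra_simps sum_distrib_left)
    finally show ?thesis .
  qed
  have "-2 * (\<Sum>k\<in>UNIV. \<Sum>j\<in>UNIV. D$k$j * ((transpose A ** Y)$k$j - (transpose A ** A ** P)$k$j))
     + \<nu> * (\<Sum>i\<in>UNIV. \<Sum>j\<in>UNIV. D$i$j) + \<gamma> * (\<Sum>i\<in>UNIV. \<Sum>j\<in>UNIV. D$i$j * ((lam + transpose lam) ** P)$i$j)
     = (\<Sum>k\<in>UNIV. \<Sum>j\<in>UNIV. -2 * (D$k$j * ((transpose A ** Y)$k$j - (transpose A ** A ** P)$k$j))
        + \<nu> * D$k$j + \<gamma> * (D$k$j * ((lam + transpose lam) ** P)$k$j))"
    by (simp only: sum.distrib sum_distrib_left)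
  also have "\<dots> = inner D (- 2 *\<^sub>R (transpose A ** Y) + 2 *\<^sub>R (transpose A ** A ** P) + (\<chi> i j. \<nu>)
          + \<gamma> *\<^sub>R ((lam + transpose lam) ** P))"
    unfolding inner_mat by (intro sum.cong refl) (simp add: algebra_simps)
  finally show ?thesis unfolding e1 e2 .
qed

lemma A_dir:
  fixes Y :: "real^'m^'n" and A D :: "real^'k^'n" and P :: "real^'m^'k"
  assumes lm: "local_min_J Y \<alpha> \<nu> \<gamma> A P"
    and Dt: "\<forall>i j. A$i$j = 0 \<longrightarrow> 0 \<le> D$i$j"
  shows "0 \<le> -2 * (\<Sum>i\<in>UNIV. \<Sum>j\<in>UNIV. (Y - A ** P)$i$j * (D ** P)$i$j) + \<alpha> * (\<Sum>i\<in>UNIV. \<Sum>j\<in>UNIV. D$i$j)"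
    (is "0 \<le> ?S")
proof -
  define R where "R = Y - A ** P"
  define C where "C = (\<Sum>i\<in>UNIV. \<Sum>j\<in>UNIV. ((D ** P)$i$j)^2)"
  from lm obtain e where e: "e > 0" and P0: "nonneg_mat P" and A0: "nonneg_mat A"
    and mn: "\<And>A' P'. nonneg_mat A' \<Longrightarrow> nonneg_mat P' \<Longrightarrow> dist A' A < e \<Longrightarrow> dist P' P < e
        \<Longrightarrow> Jobj Y \<alpha> \<nu> \<gamma> A P \<le> Jobj Y \<alpha> \<nu> \<gamma> A' P'"
    unfolding local_min_J_def by blast
  define Q where "Q = \<nu> * frob1 P + \<gamma> * frob1 (P ** transpose P - mat 1)"
  have J0: "Jobj Y \<alpha> \<nu> \<gamma> A P = (\<Sum>i\<in>UNIV. \<Sum>j\<in>UNIV. (R$i$j)^2) + \<alpha> * frob1 A + Q"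
    unfolding Jobj_def frob2_sq R_def Q_def by simp
  have "\<forall>\<^sub>F t in at_right 0. 0 \<le> ?S + t * C"
    using ev_nonneg[OF A0 Dt] ev_dist[OF e, of A D] eventually_at_right_less[of 0]
  proof eventually_elim
    case (elim t)
    then have nn: "nonneg_mat (A + t *\<^sub>R D)" and dd: "dist (A + t *\<^sub>R D) A < e" and t: "0 < t" by auto
    have "Jobj Y \<alpha> \<nu> \<gamma> A P \<le> Jobj Y \<alpha> \<nu> \<gamma> (A + t *\<^sub>R D) P"
      using mn[OF nn P0 dd] e by simp
    also have "\<dots> = (\<Sum>i\<in>UNIV. \<Sum>j\<in>UNIV. (R$i$j - t * (D ** P)$i$j)^2)
        + \<alpha> * (frob1 A + t * (\<Sum>i\<in>UNIV. \<Sum>j\<in>UNIV. D$i$j)) + Q"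
      unfolding Jobj_def frob2_sq resid_A frob1_shift[OF A0 nn] R_def Q_def by simp
    also have "(\<Sum>i\<in>UNIV. \<Sum>j\<in>UNIV. (R$i$j - t * (D ** P)$i$j)^2) =
      (\<Sum>i\<in>UNIV. \<Sum>j\<in>UNIV. (R$i$j)^2) - t * (2 * (\<Sum>i\<in>UNIV. \<Sum>j\<in>UNIV. R$i$j * (D ** P)$i$j))
      + t^2 * (\<Sum>i\<in>UNIV. \<Sum>j\<in>UNIV. ((D ** P)$i$j)^2)"
      by (rule sum_sq_expand)
    finally have "0 \<le> t * (?S + t * C)" unfolding J0 C_def R_def by (simp add: algebra_simps power2_eq_square)
    then show ?case using t by (simp add: zero_le_mult_iff)
  qed
  then show ?thesis by (rule limit_nonneg)
qed

definition Emat :: "'r \<Rightarrow> 'c \<Rightarrow> real^'c^'r" where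
  "Emat i j = (\<chi> a b. if a = i \<and> b = j then 1 else 0)"

lemma sum_delta2: "(\<Sum>a\<in>(UNIV::'a::finite set). \<Sum>b\<in>(UNIV::'b::finite set). if a = i \<and> b = j then x else 0) = (x::real)"
proof -
  have "\<And>a. (\<Sum>b\<in>(UNIV::'b set). if a = i \<and> b = j then x else 0) = (if a = i then x else 0)"
    by (cases "a = i") auto
  then show ?thesis by simp
qed

lemma inner_Emat: "inner (c *\<^sub>R Emat i j) G = c * G$i$j"
  by (simp add: inner_mat Emat_def if_distrib if_distribR sum_delta2 cong: if_cong)

lemma inner_Emat2: "inner G (c *\<^sub>R Emat i j) = c * G$i$j"
  using inner_Emat by (metis inner_commute)

lemma convex_interval_real:
  fixes x y u v lo :: real
  assumes "lo \<le> x" "lo \<le> y" "0 \<le> u" "0 \<le> v" "u + v = 1"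
  shows "lo \<le> u * x + v * y"
proof -
  have "u * lo \<le> u * x" "v * lo \<le> v * y" using assms by (auto intro: mult_left_mono)
  then have "(u + v) * lo \<le> u * x + v * y" by (simp add: algebra_simps)
  then show ?thesis using assms by simp
qed

lemma convex_interval_real2:
  fixes x y u v hi :: real
  assumes "x \<le> hi" "y \<le> hi" "0 \<le> u" "0 \<le> v" "u + v = 1"
  shows "u * x + v * y \<le> hi"
  using convex_interval_real[of "-hi" "-x" "-y" u v] assms by simp

lemma A_KKT:
  fixes Y :: "real^'m^'n" and A :: "real^'k^'n" and P :: "real^'m^'k"
  assumes lm: "local_min_J Y \<alpha> \<nu> \<gamma> A P"
  defines "G \<equiv> 2 *\<^sub>R (A ** P ** transpose P) - 2 *\<^sub>R (Y ** transpose P) + (\<chi> i j. \<alpha>)"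
  shows "0 \<le> G$i$j" and "0 < A$i$j \<Longrightarrow> G$i$j \<le> 0"
proof -
  have A0: "nonneg_mat A" using lm unfolding local_min_J_def by blast
  have "0 \<le> inner (1 *\<^sub>R Emat i j) G"
    unfolding G_def idA[symmetric]
    by (rule A_dir[OF lm]) (simp add: Emat_def)
  then show "0 \<le> G$i$j" by (simp add: inner_Emat[of 1, simplified])
  assume pos: "0 < A$i$j"
  have "0 \<le> inner ((-1) *\<^sub>R Emat i j) G"
    unfolding G_def idA[symmetric]
    by (rule A_dir[OF lm]) (use pos in \<open>auto simp: Emat_def\<close>)
  then show "G$i$j \<le> 0" by (simp only: inner_Emat)
qed

lemma P_KKT:
  fixes Y :: "real^'m^'n" and A :: "real^'k^'n" and P :: "real^'m^'k"
  assumes lm: "local_min_J Y \<alpha> \<nu> \<gamma> A P" and g: "\<gamma> \<ge> 0"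
  defines "L \<equiv> P ** transpose P - mat 1"
  defines "c \<equiv> - 2 *\<^sub>R (transpose A ** Y) + 2 *\<^sub>R (transpose A ** A ** P) + (\<chi> i j. \<nu>)"
  shows "\<exists>lam::real^'k^'k. (\<forall>a b. (if L$a$b > 0 then 1 else -1) \<le> lam$a$b \<and> lam$a$b \<le> (if L$a$b < 0 then -1 else 1))
     \<and> (\<forall>i j. 0 \<le> (c + \<gamma> *\<^sub>R ((lam + transpose lam) ** P))$i$j
              \<and> (0 < P$i$j \<longrightarrow> (c + \<gamma> *\<^sub>R ((lam + transpose lam) ** P))$i$j \<le> 0))"
proof (rule ccontr)
  assume nex: "\<not> ?thesis"
  define lo where "lo a b = (if L$a$b > 0 then 1 else (-1::real))" for a b
  define hi where "hi a b = (if L$a$b < 0 then -1 else (1::real))" for a b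
  define Box where "Box = {lam::real^'k^'k. \<forall>a b. lo a b \<le> lam$a$b \<and> lam$a$b \<le> hi a b}"
  define Lin where "Lin lam = \<gamma> *\<^sub>R ((lam + transpose lam) ** P)" for lam :: "real^'k^'k"
  define K where "K = (+) c ` (Lin ` Box)"
  define S where "S = {v::real^'m^'k. \<forall>i j. 0 \<le> v$i$j \<and> (0 < P$i$j \<longrightarrow> v$i$j \<le> 0)}"
  have lin: "linear Lin"
    by (rule linearI) (simp_all add: Lin_def vec_eq_iff mm_entry transpose_def sum.distrib sum_distrib_left algebra_simps)
  have boxc: "convex Box"
    unfolding convex_def Box_def
    by (auto intro: convex_interval_real convex_interval_real2)
  have boxb: "bounded Box"
    unfolding bounded_iff
  proof (intro exI ballI)
    fix x assume x: "x \<in> Box"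
    have "norm x \<le> (\<Sum>i\<in>UNIV. norm (x$i))" by (simp add: norm_vec_def L2_set_le_sum)
    also have "\<dots> \<le> (\<Sum>i\<in>UNIV. \<Sum>j\<in>UNIV. \<bar>x$i$j\<bar>)" by (intro sum_mono norm_le_l1_cart)
    also have "\<dots> \<le> (\<Sum>i\<in>(UNIV::'k set). \<Sum>j\<in>(UNIV::'k set). 1)"
    proof (intro sum_mono)
      fix i j
      have "lo i j \<le> x$i$j" "x$i$j \<le> hi i j" using x unfolding Box_def by auto
      then show "\<bar>x$i$j\<bar> \<le> 1" unfolding lo_def hi_def by (auto split: if_splits)
    qed
    finally show "norm x \<le> (\<Sum>i\<in>(UNIV::'k set). \<Sum>j\<in>(UNIV::'k set). 1)" .
  qed
  have boxcl: "closed Box"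
    unfolding Box_def
    by (intro closed_Collect_all closed_Collect_conj closed_Collect_le continuous_intros)
  have Kc: "convex K" unfolding K_def
    by (intro convex_translation convex_linear_image lin boxc)
  have Kk: "compact K" unfolding K_def
    by (intro compact_translation compact_continuous_image linear_continuous_on
        iffD1[OF linear_conv_bounded_linear lin])
       (simp add: compact_eq_bounded_closed boxb boxcl)
  define lam0 where "lam0 = (\<chi> a b. if L$a$b > 0 then 1 else if L$a$b < 0 then -1 else (0::real))"
  have "lam0 \<in> Box" unfolding Box_def lam0_def lo_def hi_def by auto
  then have Kne: "K \<noteq> {}" unfolding K_def by auto
  have Sc: "convex S" unfolding convex_def S_def
    by (auto intro!: add_nonneg_nonneg mult_nonneg_nonneg add_nonpos_nonpos mult_nonneg_nonpos)
  have Scl: "closed S"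
  proof -
    have "open {x::real^'m^'k. 0 < P$i$j}" for i j by (cases "0 < P$i$j") auto
    then show ?thesis unfolding S_def
      by (intro closed_Collect_all closed_Collect_conj closed_Collect_le closed_Collect_imp continuous_intros)
  qed
  have disj: "S \<inter> K = {}"
  proof (rule ccontr)
    assume "S \<inter> K \<noteq> {}"
    then obtain lam where "lam \<in> Box" "c + Lin lam \<in> S" unfolding K_def by auto
    then have P1: "\<forall>a b. lo a b \<le> lam$a$b \<and> lam$a$b \<le> hi a b"
      and P2: "\<forall>i j. 0 \<le> (c + Lin lam)$i$j \<and> (0 < P$i$j \<longrightarrow> (c + Lin lam)$i$j \<le> 0)"
      unfolding Box_def S_def by auto
    show False using nex P1 P2 unfolding lo_def hi_def Lin_def by blast
  qed
  obtain a b where sa: "\<forall>x\<in>S. inner a x < b" and ka: "\<forall>x\<in>K. inner a x > b"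
    using separating_hyperplane_closed_compact[OF Sc Scl Kc Kk Kne disj] by blast
  have "0 \<in> S" unfolding S_def by simp
  with sa have b0: "0 < b" by auto
  have aneg: "a$i$j \<le> 0" if "P$i$j = 0" for i j
  proof (rule ccontr)
    assume "\<not> a$i$j \<le> 0"
    then have ap: "a$i$j > 0" by simp
    have "(b / a$i$j) *\<^sub>R Emat i j \<in> S"
      using that b0 ap unfolding S_def Emat_def by auto
    with sa have "inner a ((b / a$i$j) *\<^sub>R Emat i j) < b" by auto
    then show False using ap by (simp only: inner_Emat2) simp
  qed
  define D where "D = - a"
  have Dt: "\<forall>i j. P$i$j = 0 \<longrightarrow> 0 \<le> D$i$j" using aneg unfolding D_def by auto
  define lam where "lam = (\<chi> x y. if L$x$y = 0 then sgn (l1P P D x y) else sgn (L$x$y))"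
  have lamB: "lam \<in> Box" unfolding Box_def lam_def lo_def hi_def by (auto simp: sgn_if)
  have "0 \<le> -2 * (\<Sum>i\<in>UNIV. \<Sum>j\<in>UNIV. (Y - A ** P)$i$j * (A ** D)$i$j)
     + \<nu> * (\<Sum>i\<in>UNIV. \<Sum>j\<in>UNIV. D$i$j)
     + \<gamma> * (\<Sum>x\<in>UNIV. \<Sum>y\<in>UNIV. (let L = (P ** transpose P - mat 1)$x$y in
               if L = 0 then \<bar>l1P P D x y\<bar> else sgn L * l1P P D x y))"
    by (rule P_dir[OF lm g Dt])
  also have "(\<Sum>x\<in>UNIV. \<Sum>y\<in>UNIV. (let L = (P ** transpose P - mat 1)$x$y in
               if L = 0 then \<bar>l1P P D x y\<bar> else sgn L * l1P P D x y))
       = (\<Sum>x\<in>UNIV. \<Sum>y\<in>UNIV. lam$x$y * l1P P D x y)"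
    unfolding lam_def L_def[symmetric] Let_def by (intro sum.cong refl) (simp add: abs_sgn)
  also have "-2 * (\<Sum>i\<in>UNIV. \<Sum>j\<in>UNIV. (Y - A ** P)$i$j * (A ** D)$i$j)
     + \<nu> * (\<Sum>i\<in>UNIV. \<Sum>j\<in>UNIV. D$i$j) + \<gamma> * (\<Sum>x\<in>UNIV. \<Sum>y\<in>UNIV. lam$x$y * l1P P D x y)
     = inner D (c + Lin lam)"
    unfolding idP c_def Lin_def by (simp add: algebra_simps)
  finally have "0 \<le> inner D (c + Lin lam)" .
  moreover have "c + Lin lam \<in> K" unfolding K_def using lamB by auto
  with ka have "inner a (c + Lin lam) > b" by auto
  ultimately show False using b0 unfolding D_def by simp
qed

lemma proj_one: "0 \<le> (x::real) \<Longrightarrow> 0 < c \<Longrightarrow> (1 + c * x) / max 1 \<bar>1 + c * x\<bar> = 1"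
proof -
  assume "0 \<le> x" "0 < c"
  then have "1 \<le> 1 + c * x" by simp
  then show ?thesis by (simp add: max_def)
qed

lemma proj_box:
  fixes l L c :: real
  assumes "c > 0" "(if L > 0 then 1 else -1) \<le> l" "l \<le> (if L < 0 then -1 else 1)"
  shows "l = (l + c * L) / max 1 \<bar>l + c * L\<bar>"
proof (cases "L > 0")
  case True
  then have "l = 1" using assms by auto
  moreover have "1 \<le> 1 + c * L" using True assms by simp
  ultimately show ?thesis by (simp add: max_def)
next
  case False
  show ?thesis
  proof (cases "L < 0")
    case True
    then have "l = -1" using assms by auto
    moreover have "0 < 1 - c * L" "c * L \<le> 0" using True assms mult_pos_neg[of c L] by simp_all
    ultimately show ?thesis by (simp add: max_def field_simps)
  next
    case F2: False
    then have "L = 0" using False by simp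
    moreover have "\<bar>l\<bar> \<le> 1" using assms F2 False by auto
    ultimately show ?thesis by (simp add: max_def)
  qed
qed

lemma compl_min:
  fixes g x c :: real
  assumes "0 \<le> x" "0 \<le> g" "0 < x \<Longrightarrow> g \<le> 0" "0 < c"
  shows "- g = min (- g + c * x) 0"
proof (cases "x > 0")
  case True
  then have "g = 0" using assms by auto
  then show ?thesis using True assms by simp
next
  case False
  then have "x = 0" using assms by simp
  then show ?thesis using assms by simp
qed

lemma compl_min':
  fixes g x c :: real
  assumes "0 \<le> x" "0 \<le> g" "0 < x \<Longrightarrow> g \<le> 0" "0 < c"
  shows "- g = min (c * x - g) 0"
  using compl_min[OF assms] by simp

theorem theorem5:
  fixes Y :: "real^'m^'n" and A :: "real^'k^'n" and P :: "real^'m^'k"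
    and \<alpha> \<nu> \<gamma> c1 c2 :: real
  assumes "\<alpha> \<ge> 0" and "\<nu> \<ge> 0" and "\<gamma> \<ge> 0"
    and "local_min_J Y \<alpha> \<nu> \<gamma> A P"
    and "c1 > 0" and "c2 > 0"
  shows "\<exists>(L :: real^'k^'k) (muA :: real^'k^'n) (lamA :: real^'k^'n)
            (muP :: real^'m^'k) (lamP :: real^'m^'k) (lamL :: real^'k^'k).
     0 = 2 *\<^sub>R (A ** P ** transpose P) - 2 *\<^sub>R (Y ** transpose P) + muA + \<alpha> *\<^sub>R lamA
   \<and> lamA = (\<chi> i j. (lamA$i$j + c2 * A$i$j) / max 1 \<bar>lamA$i$j + c2 * A$i$j\<bar>)
   \<and> muA = (\<chi> i j. min (muA$i$j + c1 * A$i$j) 0)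
   \<and> 0 = - 2 *\<^sub>R (transpose A ** Y) + 2 *\<^sub>R (transpose A ** A ** P) + muP + \<nu> *\<^sub>R lamP
          + \<gamma> *\<^sub>R ((lamL + transpose lamL) ** P)
   \<and> lamP = (\<chi> i j. (lamP$i$j + c2 * P$i$j) / max 1 \<bar>lamP$i$j + c2 * P$i$j\<bar>)
   \<and> L = P ** transpose P - mat 1
   \<and> lamL = (\<chi> i j. (lamL$i$j + c2 * L$i$j) / max 1 \<bar>lamL$i$j + c2 * L$i$j\<bar>)
   \<and> muP = (\<chi> i j. min (muP$i$j + c1 * P$i$j) 0)"
proof -
  note lm = assms(4)
  have A0: "\<forall>i j. 0 \<le> A$i$j" and P0: "\<forall>i j. 0 \<le> P$i$j"
    using lm unfolding local_min_J_def nonneg_mat_def by blast+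
  define L where "L = P ** transpose P - mat 1"
  define c where "c = - 2 *\<^sub>R (transpose A ** Y) + 2 *\<^sub>R (transpose A ** A ** P) + (\<chi> i j. \<nu>)"
  define G where "G = 2 *\<^sub>R (A ** P ** transpose P) - 2 *\<^sub>R (Y ** transpose P) + (\<chi> i j. \<alpha>)"
  obtain lam :: "real^'k^'k" where lamB: "\<forall>a b. (if L$a$b > 0 then 1 else -1) \<le> lam$a$b \<and> lam$a$b \<le> (if L$a$b < 0 then -1 else 1)"
     and vS: "\<forall>i j. 0 \<le> (c + \<gamma> *\<^sub>R ((lam + transpose lam) ** P))$i$j
              \<and> (0 < P$i$j \<longrightarrow> (c + \<gamma> *\<^sub>R ((lam + transpose lam) ** P))$i$j \<le> 0)"
    using P_KKT[OF lm assms(3)] unfolding L_def c_def by blast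
  define v where "v = c + \<gamma> *\<^sub>R ((lam + transpose lam) ** P)"
  have GA: "0 \<le> G$i$j" "0 < A$i$j \<Longrightarrow> G$i$j \<le> 0" for i j
    using A_KKT[OF lm] unfolding G_def by auto
  have nzA: "1 + c2 * A$i$j \<noteq> 0" for i j
  proof -
    have "0 \<le> c2 * A$i$j" using A0 assms(6) by simp
    then show ?thesis by linarith
  qed
  have nzP: "1 + c2 * P$i$j \<noteq> 0" for i j
  proof -
    have "0 \<le> c2 * P$i$j" using P0 assms(6) by simp
    then show ?thesis by linarith
  qed
  show ?thesis
  proof (intro exI conjI)
    show "0 = 2 *\<^sub>R (A ** P ** transpose P) - 2 *\<^sub>R (Y ** transpose P) + (- G) + \<alpha> *\<^sub>R (\<chi> i j. (1::real))"
      unfolding G_def by (simp add: vec_eq_iff)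
    show "(\<chi> i j. (1::real)) = (\<chi> i j. ((\<chi> i j. (1::real))$i$j + c2 * A$i$j) / max 1 \<bar>(\<chi> i j. (1::real))$i$j + c2 * A$i$j\<bar>)"
      using A0 assms(6) nzA by (simp add: vec_eq_iff proj_one)
    show "- G = (\<chi> i j. min ((- G)$i$j + c1 * A$i$j) 0)"
      apply (simp add: vec_eq_iff)
      apply (intro allI compl_min')
      using A0 GA assms(5) by auto
    show "0 = - 2 *\<^sub>R (transpose A ** Y) + 2 *\<^sub>R (transpose A ** A ** P) + (- v) + \<nu> *\<^sub>R (\<chi> i j. (1::real))
          + \<gamma> *\<^sub>R ((lam + transpose lam) ** P)"
      unfolding v_def c_def by (simp add: vec_eq_iff)
    show "(\<chi> i j. (1::real)) = (\<chi> i j. ((\<chi> i j. (1::real))$i$j + c2 * P$i$j) / max 1 \<bar>(\<chi> i j. (1::real))$i$j + c2 * P$i$j\<bar>)"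
      using P0 assms(6) nzP by (simp add: vec_eq_iff proj_one)
    show "L = P ** transpose P - mat 1" by (rule L_def)
    show "lam = (\<chi> i j. (lam$i$j + c2 * L$i$j) / max 1 \<bar>lam$i$j + c2 * L$i$j\<bar>)"
      using lamB assms(6) by (simp add: vec_eq_iff proj_box[symmetric])
    show "- v = (\<chi> i j. min ((- v)$i$j + c1 * P$i$j) 0)"
      apply (simp add: vec_eq_iff)
      apply (intro allI compl_min')
      using P0 vS assms(5) unfolding v_def[symmetric] by auto
  qed
qed

end
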